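(* If a system $C=(1,c_2,c_3,c_4,c_5,2c_5-c_3)$ is canonical and its subsystem $(1,c_2,c_3,c_4,c_5)$ is noncanonical, then $C$ is $(1,c_2,2c_2-1,c_4,c_2+c_4-1,2c_4-1)$ or $(1,c_2,2c_2,c_4,c_2+c_4,2c_4)$.
   Context: A system is a tuple $C=(c_1,\dots,c_n)$ of integers with $1=c_1<c_2<\dots<c_n$; for $k\le n$, $(c_1,\dots,c_k)$ is a subsystem. For a positive integer $v$, $\mathrm{opt}_C(v)$ is the minimum of $\sum_i x_i$ over $x\in\mathbb{Z}_{\ge0}^n$ with $\sum_i c_ix_i=v$. The greedy representation of $v$ is produced by: for $i=n$ down to $1$, while $c_i\le$ remaining value, take a coin $c_i$. $\mathrm{grd}_C(v)$ is its number of coins. A positive integer $w$ is a counterexample if $\mathrm{opt}_C(w)<\mathrm{grd}_C(w)$; $C$ is canonical if it has none, noncanonical otherwise. *)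

theory Defs
  imports Main
begin

definition is_system :: "nat list \<Rightarrow> bool" where
  "is_system C \<longleftrightarrow> C \<noteq> [] \<and> hd C = 1 \<and> sorted_wrt (<) C"

definition rep_value :: "nat list \<Rightarrow> nat list \<Rightarrow> nat" where
  "rep_value C x = (\<Sum>i<length C. C ! i * x ! i)"

definition opt :: "nat list \<Rightarrow> nat \<Rightarrow> nat" where
  "opt C v = Min {sum_list x | x. length x = length C \<and> rep_value C x = v}"

text \<open>Greedy coin count, processing coins from largest to smallest: for each coin c,
  take as many copies as fit (v div c), continue with the remainder.  The argument list
  is given largest-coin-first.\<close>
fun grd_desc :: "nat list \<Rightarrow> nat \<Rightarrow> nat" where
  "grd_desc [] v = 0"
| "grd_desc (c # cs) v = (if c = 0 then grd_desc cs v else v div c + grd_desc cs (v mod c))"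

definition grd :: "nat list \<Rightarrow> nat \<Rightarrow> nat" where
  "grd C v = grd_desc (rev C) v"

definition counterexample :: "nat list \<Rightarrow> nat \<Rightarrow> bool" where
  "counterexample C w \<longleftrightarrow> w > 0 \<and> opt C w < grd C w"

definition canonical :: "nat list \<Rightarrow> bool" where
  "canonical C \<longleftrightarrow> (\<forall>w>0. \<not> counterexample C w)"

end

theory Submission
  imports Defs
begin

lemma rv5: "rep_value [c0,c1,c2,c3,c4] [x0,x1,x2,x3,x4] = c0*x0+c1*x1+c2*x2+c3*x3+c4*x4"
  by (simp add: rep_value_def numeral_eq_Suc lessThan_Suc)
lemma rv6: "rep_value [c0,c1,c2,c3,c4,c5] [x0,x1,x2,x3,x4,x5] = c0*x0+c1*x1+c2*x2+c3*x3+c4*x4+c5*x5"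
  by (simp add: rep_value_def numeral_eq_Suc lessThan_Suc)
lemma len5: "length x = 5 \<Longrightarrow> \<exists>x0 x1 x2 x3 x4. x = [x0,x1,x2,x3,x4]"
  by (auto simp: length_Suc_conv numeral_eq_Suc)
lemma len6: "length x = 6 \<Longrightarrow> \<exists>x0 x1 x2 x3 x4 x5. x = [x0,x1,x2,x3,x4,x5]"
  by (auto simp: length_Suc_conv numeral_eq_Suc)

lemma mle: "1 \<le> (a::nat) \<Longrightarrow> y \<le> a * y" by simp

lemma fin5:
  assumes "1 \<le> a" "1 \<le> b" "1 \<le> c" "1 \<le> d"
  shows "finite {sum_list x | x. length x = length [1,a,b,c,d] \<and> rep_value [1,a,b,c,d] x = v}"
proof (rule finite_subset[of _ "{..v}"])
  show "{sum_list x | x. length x = length [1,a,b,c,d] \<and> rep_value [1,a,b,c,d] x = v} \<subseteq> {..v}"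
  proof
    fix t assume "t \<in> {sum_list x | x. length x = length [1,a,b,c,d] \<and> rep_value [1,a,b,c,d] x = v}"
    then obtain x where x: "t = sum_list x" "length x = 5" "rep_value [1,a,b,c,d] x = v" by auto
    then obtain x0 x1 x2 x3 x4 where xe: "x = [x0,x1,x2,x3,x4]" using len5 by blast
    have "x1 \<le> a*x1" "x2 \<le> b*x2" "x3 \<le> c*x3" "x4 \<le> d*x4" using assms mle by auto
    moreover have "t = x0+x1+x2+x3+x4" using x xe by simp
    moreover have "v = x0+a*x1+b*x2+c*x3+d*x4" using x xe rv5[of 1 a b c d] by simp
    ultimately have "t \<le> v" by linarith
    then show "t \<in> {..v}" by simp
  qed
qed simp

lemma fin6:
  assumes "1 \<le> a" "1 \<le> b" "1 \<le> c" "1 \<le> d" "1 \<le> e"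
  shows "finite {sum_list x | x. length x = length [1,a,b,c,d,e] \<and> rep_value [1,a,b,c,d,e] x = v}"
proof (rule finite_subset[of _ "{..v}"])
  show "{sum_list x | x. length x = length [1,a,b,c,d,e] \<and> rep_value [1,a,b,c,d,e] x = v} \<subseteq> {..v}"
  proof
    fix t assume "t \<in> {sum_list x | x. length x = length [1,a,b,c,d,e] \<and> rep_value [1,a,b,c,d,e] x = v}"
    then obtain x where x: "t = sum_list x" "length x = 6" "rep_value [1,a,b,c,d,e] x = v" by auto
    then obtain x0 x1 x2 x3 x4 x5 where xe: "x = [x0,x1,x2,x3,x4,x5]" using len6 by blast
    have "x1 \<le> a*x1" "x2 \<le> b*x2" "x3 \<le> c*x3" "x4 \<le> d*x4" "x5 \<le> e*x5" using assms mle by auto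
    moreover have "t = x0+x1+x2+x3+x4+x5" using x xe by simp
    moreover have "v = x0+a*x1+b*x2+c*x3+d*x4+e*x5" using x xe rv6[of 1 a b c d e] by simp
    ultimately have "t \<le> v" by linarith
    then show "t \<in> {..v}" by simp
  qed
qed simp

lemma opt5_le:
  assumes "1 \<le> a" "1 \<le> b" "1 \<le> c" "1 \<le> d"
  shows "opt [1,a,b,c,d] (x0+a*x1+b*x2+c*x3+d*x4) \<le> x0+x1+x2+x3+x4"
  unfolding opt_def
proof (rule Min_le)
  show "finite {sum_list x | x. length x = length [1,a,b,c,d] \<and> rep_value [1,a,b,c,d] x = x0+a*x1+b*x2+c*x3+d*x4}"
    using fin5[OF assms] .
  show "x0+x1+x2+x3+x4 \<in> {sum_list x | x. length x = length [1,a,b,c,d] \<and> rep_value [1,a,b,c,d] x = x0+a*x1+b*x2+c*x3+d*x4}"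
    by (rule CollectI, rule exI[of _ "[x0,x1,x2,x3,x4]"]) (simp add: rv5)
qed

lemma opt6_le:
  assumes "1 \<le> a" "1 \<le> b" "1 \<le> c" "1 \<le> d" "1 \<le> e"
  shows "opt [1,a,b,c,d,e] (x0+a*x1+b*x2+c*x3+d*x4+e*x5) \<le> x0+x1+x2+x3+x4+x5"
  unfolding opt_def
proof (rule Min_le)
  show "finite {sum_list x | x. length x = length [1,a,b,c,d,e] \<and> rep_value [1,a,b,c,d,e] x = x0+a*x1+b*x2+c*x3+d*x4+e*x5}"
    using fin6[OF assms] .
  show "x0+x1+x2+x3+x4+x5 \<in> {sum_list x | x. length x = length [1,a,b,c,d,e] \<and> rep_value [1,a,b,c,d,e] x = x0+a*x1+b*x2+c*x3+d*x4+e*x5}"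
    by (rule CollectI, rule exI[of _ "[x0,x1,x2,x3,x4,x5]"]) (simp add: rv6)
qed

lemma opt5_ex:
  assumes "1 \<le> a" "1 \<le> b" "1 \<le> c" "1 \<le> d"
  shows "\<exists>x0 x1 x2 x3 x4. x0+a*x1+b*x2+c*x3+d*x4 = v \<and> x0+x1+x2+x3+x4 = opt [1,a,b,c,d] v"
proof -
  let ?S = "{sum_list x | x. length x = length [1,a,b,c,d] \<and> rep_value [1,a,b,c,d] x = v}"
  have ne: "?S \<noteq> {}"
  proof -
    have "sum_list [v,0,0,0,0] \<in> ?S" by (rule CollectI, rule exI[of _ "[v,0,0,0,0]"]) (simp add: rv5)
    then show ?thesis by blast
  qed
  have "opt [1,a,b,c,d] v \<in> ?S" unfolding opt_def using Min_in[OF fin5[OF assms] ne] .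
  then obtain x where x: "opt [1,a,b,c,d] v = sum_list x" "length x = 5" "rep_value [1,a,b,c,d] x = v" by auto
  then obtain x0 x1 x2 x3 x4 where xe: "x = [x0,x1,x2,x3,x4]" using len5 by blast
  show ?thesis using x xe rv5[of 1 a b c d] by (intro exI[of _ x0] exI[of _ x1] exI[of _ x2] exI[of _ x3] exI[of _ x4]) auto
qed
lemma grd5_unfold:
  assumes "0 < a" "a < b" "b < c" "c < d"
  shows "grd [1,a,b,c,d] v = v div d + (v mod d) div c + ((v mod d) mod c) div b + (((v mod d) mod c) mod b) div a + (((v mod d) mod c) mod b) mod a"
  using assms by (simp add: grd_def)

lemma grd5_small:
  assumes "0 < a" "a < b" "b < c" "c < d" "v < b"
  shows "grd [1,a,b,c,d] v = v div a + v mod a"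
  using assms by (simp add: grd_def)

lemma grd5_shift:
  assumes "0 < a" "a < b" "b < c" "c < d" "d \<le> v"
  shows "grd [1,a,b,c,d] v = 1 + grd [1,a,b,c,d] (v - d)"
proof -
  have "v div d = Suc ((v - d) div d)" using assms le_div_geq[of d v] by simp
  moreover have "v mod d = (v - d) mod d" using assms le_mod_geq by simp
  ultimately show ?thesis using assms by (simp add: grd_def)
qed

lemma grd6_unfold:
  assumes "0 < e"
  shows "grd [1,a,b,c,d,e] v = v div e + grd [1,a,b,c,d] (v mod e)"
  using assms by (simp add: grd_def)

lemma grd6_low:
  assumes "0 < e" "v < e"
  shows "grd [1,a,b,c,d,e] v = grd [1,a,b,c,d] v"
  using assms grd6_unfold[of e a b c d v] by simp

lemma grd6_high:
  assumes "0 < e" "e \<le> v" "v < 2*e"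
  shows "grd [1,a,b,c,d,e] v = 1 + grd [1,a,b,c,d] (v - e)"
proof -
  have "v div e = 1" using assms by (simp add: div_nat_eqI)
  moreover have "v mod e = v - e" using assms by (simp add: le_mod_geq)
  ultimately show ?thesis using assms grd6_unfold[of e a b c d v] by simp
qed

lemma opt5_le_grd:
  assumes "1 < a" "a < b" "b < c" "c < d"
  shows "opt [1,a,b,c,d] v \<le> grd [1,a,b,c,d] v"
proof -
  define r1 where "r1 = v mod d"
  define r2 where "r2 = r1 mod c"
  define r3 where "r3 = r2 mod b"
  have "v = d * (v div d) + r1" unfolding r1_def by simp
  moreover have "r1 = c * (r1 div c) + r2" unfolding r2_def by simp
  moreover have "r2 = b * (r2 div b) + r3" unfolding r3_def by simp
  moreover have "r3 = a * (r3 div a) + r3 mod a" by simp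
  ultimately have v: "v = r3 mod a + a*(r3 div a) + b*(r2 div b) + c*(r1 div c) + d*(v div d)" by linarith
  have "opt [1,a,b,c,d] (r3 mod a + a*(r3 div a) + b*(r2 div b) + c*(r1 div c) + d*(v div d))
      \<le> r3 mod a + (r3 div a) + (r2 div b) + (r1 div c) + (v div d)"
    by (rule opt5_le) (use assms in auto)
  moreover have "grd [1,a,b,c,d] v = r3 mod a + (r3 div a) + (r2 div b) + (r1 div c) + (v div d)"
    using assms grd5_unfold[of a b c d v] unfolding r1_def r2_def r3_def by simp
  ultimately show ?thesis using v by simp
qed

lemma small1:
  assumes "0 < a" "a < b" "b < c" "c < d" "v < b" "0 < v" "grd [1,a,b,c,d] v \<le> 1"
  shows "v = 1 \<or> v = a"
proof -
  have g: "v div a + v mod a \<le> 1" using assms grd5_small[of a b c d v] by simp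
  have "v = a * (v div a) + v mod a" by simp
  then show ?thesis using g assms
    by (cases "v div a") auto
qed

lemma opt5_add:
  assumes "1 \<le> a" "1 \<le> b" "1 \<le> c" "1 \<le> d" "u \<in> {1,a,b,c,d}"
  shows "opt [1,a,b,c,d] (v + u) \<le> opt [1,a,b,c,d] v + 1"
proof -
  obtain x0 x1 x2 x3 x4 where x: "x0+a*x1+b*x2+c*x3+d*x4 = v" "x0+x1+x2+x3+x4 = opt [1,a,b,c,d] v"
    using opt5_ex[OF assms(1-4)] by blast
  consider "u = 1" | "u = a" | "u = b" | "u = c" | "u = d" using assms(5) by blast
  then show ?thesis
  proof cases
    case 1
    have "v + u = (x0+1)+a*x1+b*x2+c*x3+d*x4" using x 1 by simp
    then show ?thesis using opt5_le[OF assms(1-4), of "x0+1" x1 x2 x3 x4] x by simp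
  next
    case 2
    have "v + u = x0+a*(x1+1)+b*x2+c*x3+d*x4" using x 2 by simp
    then show ?thesis using opt5_le[OF assms(1-4), of x0 "x1+1" x2 x3 x4] x by simp
  next
    case 3
    have "v + u = x0+a*x1+b*(x2+1)+c*x3+d*x4" using x 3 by simp
    then show ?thesis using opt5_le[OF assms(1-4), of x0 x1 "x2+1" x3 x4] x by simp
  next
    case 4
    have "v + u = x0+a*x1+b*x2+c*(x3+1)+d*x4" using x 4 by simp
    then show ?thesis using opt5_le[OF assms(1-4), of x0 x1 x2 "x3+1" x4] x by simp
  next
    case 5
    have "v + u = x0+a*x1+b*x2+c*x3+d*(x4+1)" using x 5 by simp
    then show ?thesis using opt5_le[OF assms(1-4), of x0 x1 x2 x3 "x4+1"] x by simp
  qed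
qed

lemma optCD:
  assumes "1 \<le> a" "1 \<le> b" "1 \<le> c" "1 \<le> d" "1 \<le> e"
  shows "opt [1,a,b,c,d,e] v \<le> opt [1,a,b,c,d] v"
proof -
  obtain x0 x1 x2 x3 x4 where x: "x0+a*x1+b*x2+c*x3+d*x4 = v" "x0+x1+x2+x3+x4 = opt [1,a,b,c,d] v"
    using opt5_ex[OF assms(1-4)] by blast
  show ?thesis using opt6_le[OF assms, of x0 x1 x2 x3 x4 0] x by simp
qed



lemma main:
  fixes a b c d e :: nat
  assumes ab: "1 < a" "a < b" "b < c" "c < d" "d < e" and ee: "e = 2*d - b"
    and canC: "canonical [1,a,b,c,d,e]"
    and ncD: "\<not> canonical [1,a,b,c,d]"
  shows "(b = 2*a - 1 \<and> d = a + c - 1 \<and> e = 2*c - 1) \<or> (b = 2*a \<and> d = a + c \<and> e = 2*c)"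
proof -
  define s where "s = d - b"
  have sd: "d = s + b" "e = 2*s + b" "2 \<le> s" using ab ee unfolding s_def by auto
  have c1: "1 \<le> a" "1 \<le> b" "1 \<le> c" "1 \<le> d" "1 \<le> e" using ab by auto
  have a0: "0 < a" using ab by simp
  have gC: "grd [1,a,b,c,d,e] v \<le> opt [1,a,b,c,d,e] v" if "0 < v" for v
    using canC that unfolding canonical_def counterexample_def by (simp add: not_less)
  have oCD: "opt [1,a,b,c,d,e] v \<le> opt [1,a,b,c,d] v" for v using optCD[OF c1] .
  have "\<exists>w. 0 < w \<and> opt [1,a,b,c,d] w < grd [1,a,b,c,d] w"
    using ncD unfolding canonical_def counterexample_def by auto
  then obtain w where w: "0 < w" "opt [1,a,b,c,d] w < grd [1,a,b,c,d] w"
    and wmin: "\<And>v. v < w \<Longrightarrow> \<not> (0 < v \<and> opt [1,a,b,c,d] v < grd [1,a,b,c,d] v)"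
    using exists_least_iff[where P = "\<lambda>w. 0 < w \<and> opt [1,a,b,c,d] w < grd [1,a,b,c,d] w"] by blast
  have mn: "grd [1,a,b,c,d] v \<le> opt [1,a,b,c,d] v" if "0 < v" "v < w" for v
    using wmin[of v] that by auto
  have we: "e \<le> w"
  proof (rule ccontr)
    assume "\<not> e \<le> w"
    then have "grd [1,a,b,c,d,e] w = grd [1,a,b,c,d] w" using grd6_low[of e w a b c d] ab by simp
    then show False using gC[OF w(1)] oCD[of w] w(2) by simp
  qed
  obtain x0 x1 x2 x3 x4 where x: "x0+a*x1+b*x2+c*x3+d*x4 = w" "x0+x1+x2+x3+x4 = opt [1,a,b,c,d] w"
    using opt5_ex[OF c1(1-4)] by blast
  define m where "m = opt [1,a,b,c,d] w"
  have gDw: "grd [1,a,b,c,d] w = 1 + grd [1,a,b,c,d] (w - d)"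
    using grd5_shift[of a b c d w] ab we by simp
  have used: "v' < d" if u: "u \<in> {1,a,b,c}" and wv: "w = v' + u" and ov: "opt [1,a,b,c,d] v' + 1 \<le> m" for u v'
  proof (rule ccontr)
    assume "\<not> v' < d"
    then have vd: "d \<le> v'" by simp
    have u1: "1 \<le> u" using u c1 by auto
    have "grd [1,a,b,c,d] v' \<le> opt [1,a,b,c,d] v'" using mn[of v'] vd u1 wv ab by simp
    moreover have "grd [1,a,b,c,d] v' = 1 + grd [1,a,b,c,d] (v' - d)"
      using grd5_shift[of a b c d v'] ab vd by simp
    moreover have "opt [1,a,b,c,d] (v' - d) \<le> grd [1,a,b,c,d] (v' - d)"
      using opt5_le_grd[of a b c d] ab by simp
    moreover have "opt [1,a,b,c,d] (w - d) \<le> opt [1,a,b,c,d] (v' - d) + 1"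
    proof -
      have "v' - d + u = w - d" using wv vd by simp
      then show ?thesis using opt5_add[OF c1(1-4), of u "v' - d"] u by auto
    qed
    ultimately have "opt [1,a,b,c,d] (w - d) < grd [1,a,b,c,d] (w - d)"
      using ov gDw w(2) unfolding m_def by linarith
    moreover have "0 < w - d" "w - d < w" using we ab by auto
    ultimately show False using wmin[of "w - d"] by blast
  qed
  have x4: "x4 = 0"
  proof (rule ccontr)
    assume "x4 \<noteq> 0"
    then have "w - d = x0+a*x1+b*x2+c*x3+d*(x4-1)" using x(1)
      by (cases x4) auto
    then have "opt [1,a,b,c,d] (w - d) \<le> x0+x1+x2+x3+(x4-1)"
      using opt5_le[OF c1(1-4), of x0 x1 x2 x3 "x4-1"] by simp
    then have "opt [1,a,b,c,d] (w - d) < grd [1,a,b,c,d] (w - d)"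
      using x(2) gDw w(2) \<open>x4 \<noteq> 0\<close> by linarith
    moreover have "0 < w - d" "w - d < w" using we ab by auto
    ultimately show False using wmin[of "w - d"] by blast
  qed
  have test: "u = s + 1 \<or> u = s + a" if u: "u \<in> {1,a,b,c}" and ul: "u \<le> w" and wu: "w - u < d" for u
  proof -
    have su: "s < u" using wu we sd by linarith
    have ud: "u < d" using u ab by auto
    have "opt [1,a,b,c,d,e] (u + d) \<le> 2"
    proof -
      consider "u = 1" | "u = a" | "u = b" | "u = c" using u by blast
      then show ?thesis
      proof cases
        case 1 then show ?thesis using opt6_le[OF c1, of 1 0 0 0 1 0] by simp
      next
        case 2 then show ?thesis using opt6_le[OF c1, of 0 1 0 0 1 0] by (simp add: add.commute)
      next
        case 3 then show ?thesis using opt6_le[OF c1, of 0 0 1 0 1 0] by (simp add: add.commute)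
      next
        case 4 then show ?thesis using opt6_le[OF c1, of 0 0 0 1 1 0] by (simp add: add.commute)
      qed
    qed
    moreover have "grd [1,a,b,c,d,e] (u + d) = 1 + grd [1,a,b,c,d] (u + d - e)"
      using grd6_high[of e "u+d" a b c d] su ud sd ab by simp
    moreover have "u + d - e = u - s" using sd su by simp
    ultimately have "grd [1,a,b,c,d] (u - s) \<le> 1" using gC[of "u+d"] ab by simp
    moreover have "u - s < b" "0 < u - s" using su ud sd by auto
    ultimately have "u - s = 1 \<or> u - s = a" using small1[of a b c d "u - s"] ab by simp
    then show ?thesis using su by auto
  qed
  have w4: "w = x0+a*x1+b*x2+c*x3" using x(1) x4 by simp
  have m4: "m = x0+x1+x2+x3" using x(2) x4 unfolding m_def by simp
  have u0: "w - 1 < d \<and> (1 = s + 1 \<or> 1 = s + a)" if "x0 > 0"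
  proof -
    have e1: "w - 1 = (x0-1)+a*x1+b*x2+c*x3+d*0" using w4 that by simp
    have "opt [1,a,b,c,d] (w-1) \<le> (x0-1)+x1+x2+x3+0"
      unfolding e1 by (rule opt5_le[OF c1(1-4)])
    then have "opt [1,a,b,c,d] (w-1) + 1 \<le> m" using m4 that by simp
    then have "w - 1 < d" using used[of 1 "w-1"] that w4 by simp
    moreover have "1 \<le> w" using that w4 by simp
    ultimately show ?thesis using test[of 1] by simp
  qed
  have ua: "w - a < d \<and> (a = s + 1 \<or> a = s + a)" if "x1 > 0"
  proof -
    have e1: "w - a = x0+a*(x1-1)+b*x2+c*x3+d*0" using w4 that by (cases x1) auto
    have "opt [1,a,b,c,d] (w-a) \<le> x0+(x1-1)+x2+x3+0"
      unfolding e1 by (rule opt5_le[OF c1(1-4)])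
    then have "opt [1,a,b,c,d] (w-a) + 1 \<le> m" using m4 that by simp
    moreover have "a \<le> w" using that w4 by (cases x1) auto
    ultimately have "w - a < d" using used[of a "w-a"] by simp
    then show ?thesis using test[of a] \<open>a \<le> w\<close> by simp
  qed
  have ub: "w - b < d \<and> (b = s + 1 \<or> b = s + a)" if "x2 > 0"
  proof -
    have e1: "w - b = x0+a*x1+b*(x2-1)+c*x3+d*0" using w4 that by (cases x2) auto
    have "opt [1,a,b,c,d] (w-b) \<le> x0+x1+(x2-1)+x3+0"
      unfolding e1 by (rule opt5_le[OF c1(1-4)])
    then have "opt [1,a,b,c,d] (w-b) + 1 \<le> m" using m4 that by simp
    moreover have "b \<le> w" using that w4 by (cases x2) auto
    ultimately have "w - b < d" using used[of b "w-b"] by simp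
    then show ?thesis using test[of b] \<open>b \<le> w\<close> by simp
  qed
  have uc: "w - c < d \<and> (c = s + 1 \<or> c = s + a)" if "x3 > 0"
  proof -
    have e1: "w - c = x0+a*x1+b*x2+c*(x3-1)+d*0" using w4 that by (cases x3) auto
    have "opt [1,a,b,c,d] (w-c) \<le> x0+x1+x2+(x3-1)+0"
      unfolding e1 by (rule opt5_le[OF c1(1-4)])
    then have "opt [1,a,b,c,d] (w-c) + 1 \<le> m" using m4 that by simp
    moreover have "c \<le> w" using that w4 by (cases x3) auto
    ultimately have "w - c < d" using used[of c "w-c"] by simp
    then show ?thesis using test[of c] \<open>c \<le> w\<close> by simp
  qed
  have x0: "x0 = 0" using u0 sd a0 by (cases "x0 > 0") auto
  have gCw: "grd [1,a,b,c,d,e] w \<le> m" using gC[OF w(1)] oCD[of w] unfolding m_def by simp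
  have gDw2: "m < grd [1,a,b,c,d] w" using w(2) unfolding m_def by simp
  have gCw2: "grd [1,a,b,c,d,e] w = 1 + grd [1,a,b,c,d] (w - e)" if "w < 2*e"
    using grd6_high[of e w a b c d] that we ab by simp
  define P1 where "P1 = a*x1"
  define P2 where "P2 = b*x2"
  define P3 where "P3 = c*x3"
  have mk: "k \<le> y \<Longrightarrow> k*u \<le> u*(y::nat)" for k y u by (simp add: mult.commute mult_le_mono2)
  have P1: "x1 = 0 \<Longrightarrow> P1 = 0" "x1 = 1 \<Longrightarrow> P1 = a" "x1 = 2 \<Longrightarrow> P1 = 2*a"
     "x1 \<ge> 1 \<Longrightarrow> P1 \<ge> a" "x1 \<ge> 2 \<Longrightarrow> P1 \<ge> 2*a" "x1 \<ge> 3 \<Longrightarrow> P1 \<ge> 3*a"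
    unfolding P1_def using mk[of 1 x1 a] mk[of 2 x1 a] mk[of 3 x1 a] by auto
  have P2: "x2 = 0 \<Longrightarrow> P2 = 0" "x2 = 1 \<Longrightarrow> P2 = b" "x2 = 2 \<Longrightarrow> P2 = 2*b"
     "x2 \<ge> 1 \<Longrightarrow> P2 \<ge> b" "x2 \<ge> 2 \<Longrightarrow> P2 \<ge> 2*b" "x2 \<ge> 3 \<Longrightarrow> P2 \<ge> 3*b"
    unfolding P2_def using mk[of 1 x2 b] mk[of 2 x2 b] mk[of 3 x2 b] by auto
  have P3: "x3 = 0 \<Longrightarrow> P3 = 0" "x3 = 1 \<Longrightarrow> P3 = c" "x3 = 2 \<Longrightarrow> P3 = 2*c"
     "x3 \<ge> 1 \<Longrightarrow> P3 \<ge> c" "x3 \<ge> 2 \<Longrightarrow> P3 \<ge> 2*c" "x3 \<ge> 3 \<Longrightarrow> P3 \<ge> 3*c"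
    unfolding P3_def using mk[of 1 x3 c] mk[of 2 x3 c] mk[of 3 x3 c] by auto
  have wP: "w = P1 + P2 + P3" using w4 x0 unfolding P1_def P2_def P3_def by simp
  have mx: "m = x1 + x2 + x3" using m4 x0 by simp
  have ua2: "w - a < d" "a = s + 1" if "x1 > 0" using ua[OF that] sd by auto
  have ub2: "w - b < d" "b \<ge> s + 1" if "x2 > 0" using ub[OF that] sd ab by auto
  have uc2: "w - c < d" "c \<ge> s + 1" if "x3 > 0" using uc[OF that] sd ab by auto
  have A: "x2 = 0 \<and> x3 = 0" if m3: "x1 + x2 + x3 \<ge> 3"
  proof (rule ccontr)
    assume H: "\<not> (x2 = 0 \<and> x3 = 0)"
    consider (ca) "x3 > 0" "x1 > 0" | (cb) "x3 > 0" "x1 = 0" | (ba) "x3 = 0" "x2 > 0" "x1 > 0"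
      | (b0) "x3 = 0" "x2 > 0" "x1 = 0" using H by auto
    then show False
    proof cases
      case ca
      note f = ua2[OF ca(2)] uc2[OF ca(1)] P1(4) P3(4) ca
      consider "x1 \<ge> 2" | "x2 \<ge> 1" | "x3 \<ge> 2" using m3 ca by linarith
      then show False
      proof cases
        case 1 then show False using f P1(5) wP sd ab by linarith
      next
        case 2 then show False using f P2(4) wP sd ab by linarith
      next
        case 3 then show False using f P3(5) wP sd ab by linarith
      qed
    next
      case cb
      note f = uc2[OF cb(1)] P3(4) cb
      consider "x2 \<ge> 2" | "x2 \<ge> 1" "x3 \<ge> 2" | "x2 = 0" "x3 \<ge> 3" using m3 cb by linarith
      then show False
      proof cases
        case 1
        then have "0 < x2" by simp
        then show False using 1 f P2(5) ub2(2)[OF \<open>0 < x2\<close>] wP sd ab P1(1) by linarith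
      next
        case 2 then show False using f P2(4) P3(5) wP sd ab P1(1) by linarith
      next
        case 3 then show False using f P2(1) P3(6) wP sd ab P1(1) by linarith
      qed
    next
      case ba
      note f = ua2[OF ba(3)] ub2[OF ba(2)] P1(4) P2(4) P3(1) ba
      consider "x1 \<ge> 2" | "x2 \<ge> 2" using m3 ba by linarith
      then show False
      proof cases
        case 1 then show False using f P1(5) wP sd ab by linarith
      next
        case 2 then show False using f P2(5) wP sd ab by linarith
      qed
    next
      case b0
      note f = ub2[OF b0(2)] P1(1) P3(1) b0
      have "x2 \<ge> 3" using m3 b0 by linarith
      then show False using f P2(6) wP sd ab by linarith
    qed
  qed
  have ga: "grd [1,a,b,c,d] a = 1" using grd5_small[of a b c d a] ab by simp
  have ga1: "grd [1,a,b,c,d] (a - 1) = a - 1" using grd5_small[of a b c d "a-1"] ab by simp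
  have mge: "x1 + x2 + x3 \<ge> 2"
  proof (rule ccontr)
    assume "\<not> x1 + x2 + x3 \<ge> 2"
    then have "(x1 = 0 \<and> x2 = 0 \<and> x3 = 0) \<or> (x1 = 1 \<and> x2 = 0 \<and> x3 = 0) \<or> (x1 = 0 \<and> x2 = 1 \<and> x3 = 0)
      \<or> (x1 = 0 \<and> x2 = 0 \<and> x3 = 1)" by presburger
    then consider "x1 = 0" "x2 = 0" "x3 = 0" | "x1 = 1" "x2 = 0" "x3 = 0" | "x1 = 0" "x2 = 1" "x3 = 0"
      | "x1 = 0" "x2 = 0" "x3 = 1" by blast
    then show False
    proof cases
      case 1 then show False using P1(1) P2(1) P3(1) wP w(1) by simp
    next
      case 2 then show False using P1(2) P2(1) P3(1) wP we ab by simp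
    next
      case 3 then show False using P1(1) P2(2) P3(1) wP we ab by simp
    next
      case 4 then show False using P1(1) P2(1) P3(2) wP we ab by simp
    qed
  qed
  have mle: "x1 + x2 + x3 \<le> 2"
  proof (rule ccontr)
    assume "\<not> x1 + x2 + x3 \<le> 2"
    then have m3: "x1 + x2 + x3 \<ge> 3" by simp
    then have z: "x2 = 0" "x3 = 0" using A by auto
    then have x13: "x1 \<ge> 3" using m3 by simp
    have as: "a = s + 1" "w - a < d" using ua2 x13 by auto
    have wPe: "w = P1" using wP z P2(1) P3(1) by simp
    have "w = e" using as wPe we sd P1(6)[OF x13] by linarith
    then have "w - d = a - 1" using sd as by simp
    then have "grd [1,a,b,c,d] w = a" using gDw ga1 as by simp
    then have xa: "x1 < a" using gDw2 mx z by simp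
    define k where "k = x1 - 3"
    have Pk: "P1 = a*k + 3*a" unfolding P1_def k_def using x13
      by (simp add: algebra_simps)
    have bs: "b - s = a*k + 3" using Pk \<open>w = e\<close> wPe sd as by simp
    have o2: "opt [1,a,b,c,d,e] (b + d) \<le> 2"
      using opt6_le[OF c1, of 0 0 1 0 1 0] by (simp add: add.commute)
    have "grd [1,a,b,c,d,e] (b + d) = 1 + grd [1,a,b,c,d] (b + d - e)"
      using grd6_high[of e "b+d" a b c d] sd ab bs by simp
    moreover have "b + d - e = b - s" using sd bs by simp
    moreover have "grd [1,a,b,c,d] (b - s) = (b-s) div a + (b-s) mod a"
      using grd5_small[of a b c d "b - s"] ab sd by simp
    moreover have "(b-s) div a = k" "(b-s) mod a = 3" using bs xa x13 by (simp_all add: add.commute)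
    ultimately have "grd [1,a,b,c,d,e] (b + d) = 1 + k + 3" by simp
    then show False using gC[of "b+d"] o2 ab by simp
  qed
  have m2: "x1 + x2 + x3 = 2" using mge mle by simp
  have "(x1 = 2 \<and> x2 = 0 \<and> x3 = 0) \<or> (x1 = 0 \<and> x2 = 2 \<and> x3 = 0) \<or> (x1 = 0 \<and> x2 = 0 \<and> x3 = 2)
    \<or> (x1 = 1 \<and> x2 = 1 \<and> x3 = 0) \<or> (x1 = 1 \<and> x2 = 0 \<and> x3 = 1) \<or> (x1 = 0 \<and> x2 = 1 \<and> x3 = 1)"
    using m2 by presburger
  then consider "x1 = 2" "x2 = 0" "x3 = 0" | "x1 = 0" "x2 = 2" "x3 = 0" | "x1 = 0" "x2 = 0" "x3 = 2"
    | "x1 = 1" "x2 = 1" "x3 = 0" | "x1 = 1" "x2 = 0" "x3 = 1" | "x1 = 0" "x2 = 1" "x3 = 1"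
    by blast
  then show ?thesis
  proof cases
    case 1
    then show ?thesis using ua2 P1(3) P2(1) P3(1) wP we sd ab by simp
  next
    case 2
    then have wb: "w = 2*b" using P1(1) P2(3) P3(1) wP by simp
    have "b = s + 1 \<or> b = s + a" using ub 2 by simp
    then show ?thesis
    proof
      assume "b = s + 1" then show ?thesis using wb we sd by simp
    next
      assume bs: "b = s + a"
      then have "w - d = a" using wb sd by simp
      then have "grd [1,a,b,c,d] w = 2" using gDw ga by simp
      then show ?thesis using gDw2 mx 2 by simp
    qed
  next
    case 3
    then have wc: "w = 2*c" using P1(1) P2(1) P3(3) wP by simp
    have "c = s + 1 \<or> c = s + a" using uc 3 by simp
    then show ?thesis
    proof
      assume "c = s + 1" then show ?thesis using wc we sd ab by simp
    next
      assume cs: "c = s + a"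
      have b2a: "b \<le> 2*a" using wc cs we sd by simp
      have "w - e = 2*a - b" using wc cs sd by simp
      moreover have "grd [1,a,b,c,d] (2*a - b) = 2*a - b"
        using grd5_small[of a b c d "2*a-b"] ab by simp
      moreover have "w < 2*e" using wc cs sd ab by simp
      ultimately have "1 + (2*a - b) \<le> 2" using gCw2 gCw mx 3 by simp
      then have "b = 2*a - 1 \<or> b = 2*a" using b2a by presburger
      then show ?thesis using cs sd ab by auto
    qed
  next
    case 4
    then show ?thesis using ua2 ub P1(2) P2(2) P3(1) wP we sd ab by auto
  next
    case 5
    have as: "a = s + 1" using ua2 5 by simp
    have cs: "c = s + a" using uc 5 as ab by auto
    have wac: "w = a + c" using 5 P1(2) P2(1) P3(2) wP by simp
    have b1: "b = a + 1" using wac we sd as cs ab by simp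
    have o2: "opt [1,a,b,c,d,e] (2*c) \<le> 2"
      using opt6_le[OF c1, of 0 0 0 2 0 0] by (simp add: mult.commute)
    have "grd [1,a,b,c,d,e] (2*c) = 1 + grd [1,a,b,c,d] (2*c - e)"
      using grd6_high[of e "2*c" a b c d] sd ab as cs b1 by simp
    moreover have "2*c - e = a - 1" using sd as cs b1 by simp
    ultimately have "grd [1,a,b,c,d,e] (2*c) = a" using ga1 as by simp
    then show ?thesis using gC[of "2*c"] o2 as sd ab by simp
  next
    case 6
    have bs: "b = s + 1" and cs: "c = s + a" using ub uc 6 ab sd by auto
    have wbc: "w = b + c" using 6 P1(1) P2(2) P3(2) wP by simp
    have "w - d = a" using wbc we bs cs sd ab by simp
    then have "grd [1,a,b,c,d] w = 2" using gDw ga by simp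
    then show ?thesis using gDw2 mx 6 by simp
  qed
qed


theorem lemma8:
  fixes c2 c3 c4 c5 :: nat
  assumes "is_system [1, c2, c3, c4, c5, 2 * c5 - c3]"
    and "canonical [1, c2, c3, c4, c5, 2 * c5 - c3]"
    and "\<not> canonical [1, c2, c3, c4, c5]"
  shows "[1, c2, c3, c4, c5, 2 * c5 - c3] = [1, c2, 2 * c2 - 1, c4, c2 + c4 - 1, 2 * c4 - 1]
       \<or> [1, c2, c3, c4, c5, 2 * c5 - c3] = [1, c2, 2 * c2, c4, c2 + c4, 2 * c4]"
proof -
  have o: "1 < c2" "c2 < c3" "c3 < c4" "c4 < c5" "c5 < 2 * c5 - c3"
    using assms(1) unfolding is_system_def by auto
  have "(c3 = 2*c2 - 1 \<and> c5 = c2 + c4 - 1 \<and> 2 * c5 - c3 = 2*c4 - 1) \<or> (c3 = 2*c2 \<and> c5 = c2 + c4 \<and> 2 * c5 - c3 = 2*c4)"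
    by (rule main[OF o refl assms(2) assms(3)])
  then show ?thesis by auto
qed

end
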